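(* Suppose $n_0>0$ and consider an orbit of the system in the interior of the cube that converges as $\lambda\to+\infty$ to $P_2=(U,Q,\Omega)=(0,1,0)$. Then the limits $$C=\lim_{\lambda\to\infty}\frac{\Omega^{1/a}}{1-Q},\qquad D=\lim_{\lambda\to\infty}\frac{\Omega^{n_0/a}}{U}$$ exist and are positive and finite, and the corresponding perfect fluid solution has finite radius $R$ and total mass $M$ given by $$R^2=\frac{1}{4\pi\rho_-}\frac{C}{D},\qquad M^2=\frac{1}{4\pi\rho_-}\frac{C^3}{D}.$$ Moreover near the surface, with $\delta r=(R-r)/R$, the Newtonian potential satisfies $v(r)=-C\delta r-C\delta r^2+v_S+O(\delta r^{2+\min(1,n_0)})$.
   Context: Equation of state: $\rho=\rho(p)$ with $\rho>0$ for $p>0$, $\eta(p)=\int_0^p dp'/\rho(p')$ finite; index function $n(\eta)=\frac{\eta}{\rho}\frac{d\rho}{d\eta}$; asymptotically polytropic with $\rho(\eta)=\rho_-\eta^{n_0}(1+O(\eta^{a_0}))$ as $\eta\to0$ ($\rho_->0$, $a_0>0$). Perfect fluid: $dm/dr=4\pi r^2\rho$, $dp/dr=-m\rho/r^2$; Newtonian potential $v$ with $v=v_S-\eta$, $v_S$ the surface potential. Variables $U=u/(1+u)$, $Q=q/(1+q)$, $\Omega=\eta^a/(1+\eta^a)$ with $u=4\pi r^3\rho/m$, $q=m/(r\eta)$, $a>0$, obeying $\frac{dU}{d\lambda}=U(1-U)[(1-Q)(3-4U)-n(\Omega)Q(1-U)]$, $\frac{dQ}{d\lambda}=Q(1-Q)[(2U-1)(1-Q)+Q(1-U)]$,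 $\frac{d\Omega}{d\lambda}=-a\Omega(1-\Omega)Q(1-U)$, $d\lambda/d\ln r=(1-U)^{-1}(1-Q)^{-1}$. *)

theory Defs
  imports "HOL-Analysis.Analysis" "HOL-Library.Landau_Symbols"
begin

text \<open>The equation of state is parametrised by the enthalpy-like variable
  eta, i.e. rhoE eta = rho(p(eta)).\<close>

definition index_fn :: "(real \<Rightarrow> real) \<Rightarrow> real \<Rightarrow> real" where
  "index_fn rhoE eta = eta / rhoE eta * deriv rhoE eta"

text \<open>eta as a function of Omega = eta^a/(1+eta^a).\<close>
definition eta_of :: "real \<Rightarrow> real \<Rightarrow> real" where
  "eta_of a Om = (Om / (1 - Om)) powr (1 / a)"

text \<open>Right-hand sides of the dynamical system; nO is n as a function of Omega.\<close>
definition fU :: "(real \<Rightarrow> real) \<Rightarrow> real \<Rightarrow> real \<Rightarrow> real \<Rightarrow> real" where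
  "fU nO U Q Om = U * (1 - U) * ((1 - Q) * (3 - 4 * U) - nO Om * Q * (1 - U))"

definition fQ :: "real \<Rightarrow> real \<Rightarrow> real" where
  "fQ U Q = Q * (1 - Q) * ((2 * U - 1) * (1 - Q) + Q * (1 - U))"

definition fOm :: "real \<Rightarrow> real \<Rightarrow> real \<Rightarrow> real \<Rightarrow> real" where
  "fOm a U Q Om = - a * Om * (1 - Om) * Q * (1 - U)"

text \<open>Perfect fluid quantities reconstructed from a point (U,Q,Omega):
  u = U/(1-U), q = Q/(1-Q), eta = eta_of a Omega,
  rho = rhoE eta = u q eta / (4 pi r^2), m = q r eta.\<close>
definition fluid_r :: "(real \<Rightarrow> real) \<Rightarrow> real \<Rightarrow> real \<Rightarrow> real \<Rightarrow> real \<Rightarrow> real" where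
  "fluid_r rhoE a U Q Om =
     (let u = U / (1 - U); q = Q / (1 - Q); eta = eta_of a Om
      in sqrt (u * q * eta / (4 * pi * rhoE eta)))"

definition fluid_m :: "(real \<Rightarrow> real) \<Rightarrow> real \<Rightarrow> real \<Rightarrow> real \<Rightarrow> real \<Rightarrow> real" where
  "fluid_m rhoE a U Q Om =
     (Q / (1 - Q)) * fluid_r rhoE a U Q Om * eta_of a Om"

end

theory Submission
  imports Defs
begin

lemma logder_mult:
  assumes "(f has_real_derivative f x * \<alpha>) (at x)" "(g has_real_derivative g x * \<beta>) (at x)"
  shows "((\<lambda>x. f x * g x) has_real_derivative (f x * g x) * (\<alpha> + \<beta>)) (at x)"
  by (rule DERIV_cong[OF DERIV_mult[OF assms]]) (simp add: algebra_simps)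

lemma logder_divide:
  assumes "(f has_real_derivative f x * \<alpha>) (at x)" "(g has_real_derivative g x * \<beta>) (at x)"
    and "g x \<noteq> 0"
  shows "((\<lambda>x. f x / g x) has_real_derivative (f x / g x) * (\<alpha> - \<beta>)) (at x)"
proof (rule DERIV_cong[OF DERIV_divide[OF assms]])
  show "(f x * \<alpha> * g x - f x * (g x * \<beta>)) / (g x * g x) = f x / g x * (\<alpha> - \<beta>)"
    using assms(3) by (simp add: field_simps)
qed

lemma logder_cmult:
  assumes "(f has_real_derivative f x * \<alpha>) (at x)"
  shows "((\<lambda>x. c * f x) has_real_derivative (c * f x) * \<alpha>) (at x)"
  by (rule DERIV_cong[OF DERIV_cmult[OF assms]]) (simp add: algebra_simps)

lemma logder_sqrt:
  assumes "(f has_real_derivative f x * \<alpha>) (at x)" "f x > 0"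
  shows "((\<lambda>x. sqrt (f x)) has_real_derivative sqrt (f x) * (\<alpha> / 2)) (at x)"
proof (rule DERIV_cong[OF DERIV_chain2[OF DERIV_real_sqrt[OF assms(2)] assms(1)]])
  have "f x = sqrt (f x) * sqrt (f x)" using assms(2) by simp
  then show "inverse (sqrt (f x)) / 2 * (f x * \<alpha>) = sqrt (f x) * (\<alpha> / 2)"
    using assms(2) by (simp add: field_simps)
qed

lemma logder_powr:
  assumes "(f has_real_derivative f x * \<alpha>) (at x)" "f x > 0"
  shows "((\<lambda>x. f x powr p) has_real_derivative (f x powr p) * (p * \<alpha>)) (at x)"
proof (rule DERIV_cong[OF DERIV_chain2[OF has_real_derivative_powr[OF assms(2)] assms(1)]])
  show "p * f x powr (p - 1) * (f x * \<alpha>) = f x powr p * (p * \<alpha>)"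
    using assms(2) by (simp add: powr_diff field_simps)
qed

lemma logder_ln:
  assumes "(f has_real_derivative f x * \<alpha>) (at x)" "f x > 0"
  shows "((\<lambda>x. ln (f x)) has_real_derivative \<alpha>) (at x)"
  by (rule DERIV_cong[OF DERIV_chain2[OF DERIV_ln[OF assms(2)] assms(1)]]) (use assms(2) in simp)

lemma logder_frac:
  assumes "(f has_real_derivative f x * (1 - f x) * \<alpha>) (at x)" "0 < f x" "f x < 1"
  shows "((\<lambda>x. f x / (1 - f x)) has_real_derivative (f x / (1 - f x)) * \<alpha>) (at x)"
proof -
  have "((\<lambda>x. 1 - f x) has_real_derivative (1 - f x) * (- f x * \<alpha>)) (at x)"
    by (rule DERIV_cong[OF DERIV_diff[OF DERIV_const assms(1)]]) (simp add: algebra_simps)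
  have d1: "(f has_real_derivative f x * ((1 - f x) * \<alpha>)) (at x)"
    using assms(1) by (simp add: algebra_simps)
  have "((\<lambda>x. f x / (1 - f x)) has_real_derivative (f x / (1 - f x)) * ((1 - f x) * \<alpha> - (- f x * \<alpha>))) (at x)"
    by (rule logder_divide[OF d1]) (use assms \<open>((\<lambda>x. 1 - f x) has_real_derivative _) _\<close> in auto)
  then show ?thesis by (simp add: algebra_simps)
qed

lemma deriv_dpow:
  fixes r :: "real \<Rightarrow> real"
  assumes "R - r x > 0" "(r has_real_derivative r') (at x)"
  shows "((\<lambda>x. (R - r x) powr p) has_real_derivative - (p * (R - r x) powr (p - 1) * r')) (at x)"
proof -
  have "((\<lambda>x. R - r x) has_real_derivative - r') (at x)"
    using DERIV_diff[OF DERIV_const assms(2)] by simp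
  from DERIV_chain2[OF has_real_derivative_powr[OF assms(1)] this] show ?thesis by simp
qed

lemma nonneg_if_deriv_nonpos:
  fixes f f' :: "real \<Rightarrow> real"
  assumes "\<And>x. x \<ge> L \<Longrightarrow> (f has_real_derivative f' x) (at x)"
    and "\<And>x. x \<ge> L \<Longrightarrow> f' x \<le> 0" and "(f \<longlongrightarrow> 0) at_top" and "x \<ge> L"
  shows "0 \<le> f x"
proof -
  have "eventually (\<lambda>y. f y \<le> f x) at_top"
    using eventually_ge_at_top[of x]
  proof eventually_elim
    case (elim y)
    show ?case
      by (rule deriv_nonpos_imp_antimono[of x y f f']) (use assms elim in auto)
  qed
  then show ?thesis
    using tendsto_le[OF trivial_limit_at_top_linorder tendsto_const assms(3)] by blast
qed

lemma incr_bdd_lim: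
  fixes f :: "real \<Rightarrow> real"
  assumes "\<And>x y. L \<le> x \<Longrightarrow> x \<le> y \<Longrightarrow> f x \<le> f y" "\<And>x. L \<le> x \<Longrightarrow> f x \<le> B"
  shows "(f \<longlongrightarrow> Sup (f ` {L..})) at_top \<and> (\<forall>x\<ge>L. f x \<le> Sup (f ` {L..}))"
proof -
  have bdd: "bdd_above (f ` {L..})" using assms(2) by (auto intro!: bdd_aboveI)
  have up: "\<forall>x\<ge>L. f x \<le> Sup (f ` {L..})" using bdd by (auto intro!: cSup_upper)
  have "(f \<longlongrightarrow> Sup (f ` {L..})) at_top"
  proof (rule increasing_tendsto)
    show "\<forall>\<^sub>F n in at_top. f n \<le> Sup (f ` {L..})"
      using eventually_ge_at_top[of L] by eventually_elim (use up in auto)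
  next
    fix x assume "x < Sup (f ` {L..})"
    then obtain y where y: "y \<ge> L" "x < f y"
      using less_cSup_iff[OF _ bdd] by auto
    show "\<forall>\<^sub>F n in at_top. x < f n"
      using eventually_ge_at_top[of y]
      by (rule eventually_mono) (use y assms(1) in force)
  qed
  with up show ?thesis by blast
qed


theorem mainTheorem12:
  fixes rhoE :: "real \<Rightarrow> real" and rho_minus n0 a0 a lam0 :: real
    and U Q Om :: "real \<Rightarrow> real"
  assumes rho_pos: "\<forall>eta>0. rhoE eta > 0"
    and rho_diff: "\<forall>eta>0. rhoE differentiable (at eta)"
    and rho_minus_pos: "rho_minus > 0" and a0_pos: "a0 > 0"
    and polytropic: "(\<lambda>eta. rhoE eta / (rho_minus * eta powr n0) - 1) \<in> O[at_right 0](\<lambda>eta. eta powr a0)"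
    and n0_pos: "n0 > 0"
    and a_pos: "a > 0"
    and interior: "\<forall>l\<ge>lam0. U l \<in> {0<..<1} \<and> Q l \<in> {0<..<1} \<and> Om l \<in> {0<..<1}"
    and odeU: "\<forall>l\<ge>lam0. (U has_real_derivative
                 fU (\<lambda>w. index_fn rhoE (eta_of a w)) (U l) (Q l) (Om l)) (at l)"
    and odeQ: "\<forall>l\<ge>lam0. (Q has_real_derivative fQ (U l) (Q l)) (at l)"
    and odeOm: "\<forall>l\<ge>lam0. (Om has_real_derivative fOm a (U l) (Q l) (Om l)) (at l)"
    and toP2: "(U \<longlongrightarrow> 0) at_top" "(Q \<longlongrightarrow> 1) at_top" "(Om \<longlongrightarrow> 0) at_top"
  shows "\<exists>C D R M.
     0 < C \<and> 0 < D \<and>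
     ((\<lambda>l. Om l powr (1 / a) / (1 - Q l)) \<longlongrightarrow> C) at_top \<and>
     ((\<lambda>l. Om l powr (n0 / a) / U l) \<longlongrightarrow> D) at_top \<and>
     0 < R \<and> 0 < M \<and>
     ((\<lambda>l. fluid_r rhoE a (U l) (Q l) (Om l)) \<longlongrightarrow> R) at_top \<and>
     ((\<lambda>l. fluid_m rhoE a (U l) (Q l) (Om l)) \<longlongrightarrow> M) at_top \<and>
     R\<^sup>2 = 1 / (4 * pi * rho_minus) * (C / D) \<and>
     M\<^sup>2 = 1 / (4 * pi * rho_minus) * (C ^ 3 / D) \<and>
     (let vS = - M / R;
          r = (\<lambda>l. fluid_r rhoE a (U l) (Q l) (Om l));
          v = (\<lambda>l. vS - eta_of a (Om l));
          dr = (\<lambda>l. (R - r l) / R)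
      in (\<lambda>l. v l - (- C * dr l - C * (dr l)\<^sup>2 + vS))
           \<in> O[at_top](\<lambda>l. dr l powr (2 + min 1 n0)))"
proof -
  define e where "e = (\<lambda>l. eta_of a (Om l))"
  define nn where "nn = (\<lambda>l. index_fn rhoE (e l))"
  define r where "r = (\<lambda>l. fluid_r rhoE a (U l) (Q l) (Om l))"
  define m where "m = (\<lambda>l. fluid_m rhoE a (U l) (Q l) (Om l))"
  define u where "u = (\<lambda>l. U l / (1 - U l))"
  define q where "q = (\<lambda>l. Q l / (1 - Q l))"
  define rh where "rh = (\<lambda>l. rhoE (e l))"
  define S where "S = (\<lambda>l. u l * q l * e l / (4 * pi * rh l))"
  have r_eq: "r = (\<lambda>l. sqrt (S l))"
    unfolding r_def S_def fluid_r_def u_def q_def rh_def e_def Let_def by simp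
  have m_eq: "m = (\<lambda>l. q l * r l * e l)"
    unfolding m_def fluid_m_def q_def r_def e_def by simp
  have e_eq: "e = (\<lambda>l. (Om l / (1 - Om l)) powr (1/a))"
    unfolding e_def eta_of_def ..
  have pos: "0 < e l \<and> 0 < rh l \<and> 0 < u l \<and> 0 < q l \<and> 0 < S l \<and> 0 < r l \<and> 0 < m l"
    if l: "l \<ge> lam0" for l
  proof -
    have I: "U l \<in> {0<..<1}" "Q l \<in> {0<..<1}" "Om l \<in> {0<..<1}" using interior l by auto
    have e: "0 < e l" using I unfolding e_eq by simp
    have rh: "0 < rh l" using e rho_pos unfolding rh_def by auto
    have uq: "0 < u l" "0 < q l" using I unfolding u_def q_def by auto
    have S: "0 < S l" using e rh uq unfolding S_def by simp
    have r: "0 < r l" using S unfolding r_eq by simp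
    have m: "0 < m l" using r uq e unfolding m_eq by simp
    show ?thesis using e rh uq S r m by blast
  qed
  have ders: "(e has_real_derivative e l * (- Q l * (1 - U l))) (at l) \<and>
     (r has_real_derivative r l * ((1 - U l) * (1 - Q l))) (at l) \<and>
     (m has_real_derivative m l * (U l * (1 - Q l))) (at l)"
    if l: "l \<ge> lam0" for l
  proof -
    have I: "U l \<in> {0<..<1}" "Q l \<in> {0<..<1}" "Om l \<in> {0<..<1}" using interior l by auto
    note P = pos[OF l]
    have dU: "(U has_real_derivative U l * (1 - U l) * ((1 - Q l) * (3 - 4 * U l) - nn l * Q l * (1 - U l))) (at l)"
      by (rule DERIV_cong[OF odeU[rule_format, OF l]]) (simp add: fU_def nn_def e_def algebra_simps)
    have dQ: "(Q has_real_derivative Q l * (1 - Q l) * ((2 * U l - 1) * (1 - Q l) + Q l * (1 - U l))) (at l)"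
      by (rule DERIV_cong[OF odeQ[rule_format, OF l]]) (simp add: fQ_def algebra_simps)
    have dOm: "(Om has_real_derivative Om l * (1 - Om l) * (- a * Q l * (1 - U l))) (at l)"
      by (rule DERIV_cong[OF odeOm[rule_format, OF l]]) (simp add: fOm_def algebra_simps)
    have du: "(u has_real_derivative u l * ((1 - Q l) * (3 - 4 * U l) - nn l * Q l * (1 - U l))) (at l)"
      unfolding u_def by (rule logder_frac[OF dU]) (use I in auto)
    have dq: "(q has_real_derivative q l * ((2 * U l - 1) * (1 - Q l) + Q l * (1 - U l))) (at l)"
      unfolding q_def by (rule logder_frac[OF dQ]) (use I in auto)
    have dz: "((\<lambda>l. Om l / (1 - Om l)) has_real_derivative (Om l / (1 - Om l)) * (- a * Q l * (1 - U l))) (at l)"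
      by (rule logder_frac[OF dOm]) (use I in auto)
    have de: "(e has_real_derivative e l * (- Q l * (1 - U l))) (at l)"
      unfolding e_eq
      by (rule DERIV_cong[OF logder_powr[OF dz]]) (use I a_pos in auto)
    have dr0: "DERIV rhoE (e l) :> deriv rhoE (e l)"
      using rho_diff P DERIV_deriv_iff_real_differentiable by blast
    have drh: "(rh has_real_derivative rh l * (- nn l * Q l * (1 - U l))) (at l)"
    proof -
      have "(rh has_real_derivative deriv rhoE (e l) * (e l * (- Q l * (1 - U l)))) (at l)"
        unfolding rh_def by (rule DERIV_chain2[OF dr0 de])
      moreover have "deriv rhoE (e l) * (e l * (- Q l * (1 - U l))) = rh l * (- nn l * Q l * (1 - U l))"
        using P unfolding nn_def index_fn_def rh_def by (simp add: field_simps)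
      ultimately show ?thesis by (rule DERIV_cong)
    qed
    have dS: "(S has_real_derivative S l * (2 * ((1 - U l) * (1 - Q l)))) (at l)"
      unfolding S_def
      by (rule DERIV_cong[OF logder_divide[OF logder_mult[OF logder_mult[OF du dq] de] logder_cmult[OF drh]]])
        (use P in \<open>auto simp: algebra_simps\<close>)
    have dr: "(r has_real_derivative r l * ((1 - U l) * (1 - Q l))) (at l)"
      unfolding r_eq by (rule DERIV_cong[OF logder_sqrt[OF dS]]) (use P in auto)
    have dm: "(m has_real_derivative m l * (U l * (1 - Q l))) (at l)"
      unfolding m_eq
      by (rule DERIV_cong[OF logder_mult[OF logder_mult[OF dq dr] de]]) (auto simp: algebra_simps m_eq)
    show ?thesis using de dr dm by blast
  qed

  obtain c0 where c0: "c0 > 0"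
    "eventually (\<lambda>x. norm (rhoE x / (rho_minus * x powr n0) - 1) \<le> c0 * norm (x powr a0)) (at_right 0)"
    using polytropic unfolding bigo_def by auto
  have ev01: "eventually (\<lambda>x. x \<in> {0<..<1}) (at_right (0::real))"
    by (rule eventually_at_right_real) simp
  define Kr where "Kr = (1 + c0) * rho_minus"
  have Kr_pos: "Kr > 0" unfolding Kr_def using c0 rho_minus_pos by simp
  have rho_bd: "eventually (\<lambda>x. rhoE x \<le> Kr * x powr n0) (at_right 0)"
    using c0(2) ev01
  proof eventually_elim
    case (elim x)
    have x: "0 < x" "x < 1" using elim by auto
    have "x powr a0 \<le> 1" using x a0_pos by (intro powr_le1) auto
    then have "norm (rhoE x / (rho_minus * x powr n0) - 1) \<le> c0"
      using elim c0(1) x by (smt (verit) mult_left_le norm_ge_zero powr_ge_zero real_norm_def)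
    then have "rhoE x / (rho_minus * x powr n0) \<le> 1 + c0" by simp
    moreover have "rho_minus * x powr n0 > 0" using x rho_minus_pos by simp
    ultimately show ?case unfolding Kr_def by (simp add: divide_le_eq algebra_simps)
  qed
  have rho_lim: "((\<lambda>x. x powr n0 / rhoE x) \<longlongrightarrow> 1 / rho_minus) (at_right 0)"
  proof -
    have "((\<lambda>x. x powr a0) \<longlongrightarrow> 0) (at_right (0::real))"
      by (rule tendsto_zero_powrI[OF tendsto_ident_at tendsto_const _ a0_pos])
        (use ev01 in \<open>auto elim: eventually_mono\<close>)
    then have "((\<lambda>x. c0 * norm (x powr a0)) \<longlongrightarrow> 0) (at_right (0::real))"
      using tendsto_mult_right_zero tendsto_norm_zero by blast
    then have "((\<lambda>x. rhoE x / (rho_minus * x powr n0) - 1) \<longlongrightarrow> 0) (at_right 0)"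
      by (rule Lim_null_comparison[OF c0(2)])
    then have "((\<lambda>x. inverse ((rhoE x / (rho_minus * x powr n0) - 1) + 1) / rho_minus) \<longlongrightarrow> inverse (0 + 1) / rho_minus) (at_right 0)"
      by (intro tendsto_intros) (use rho_minus_pos in auto)
    then show ?thesis
      using rho_minus_pos by (simp add: field_simps)
  qed
  have ev_lam: "eventually (\<lambda>l. l \<ge> lam0) at_top" by (rule eventually_ge_at_top)
  have e_lim: "(e \<longlongrightarrow> 0) at_top"
  proof -
    have "((\<lambda>l. Om l / (1 - Om l)) \<longlongrightarrow> 0 / (1 - 0)) at_top"
      by (intro tendsto_intros toP2) simp
    moreover have "eventually (\<lambda>l. 0 \<le> Om l / (1 - Om l)) at_top"
      using ev_lam by eventually_elim (use interior in auto)
    ultimately have "((\<lambda>l. (Om l / (1 - Om l)) powr (1/a)) \<longlongrightarrow> 0) at_top"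
      using a_pos by (intro tendsto_zero_powrI[OF _ tendsto_const]) auto
    then show ?thesis unfolding e_eq .
  qed
  have e_right: "filterlim e (at_right 0) at_top"
    by (rule tendsto_imp_filterlim_at_right[OF e_lim]) (use ev_lam in eventually_elim, use pos in auto)
  have evrho: "eventually (\<lambda>l. rh l \<le> Kr * e l powr n0) at_top"
    using eventually_compose_filterlim[OF rho_bd e_right] unfolding rh_def .
  have evU: "eventually (\<lambda>l. U l < 1/4) at_top" using toP2(1) by (rule order_tendstoD) simp
  have evQ: "eventually (\<lambda>l. Q l > 3/4) at_top" using toP2(2) by (rule order_tendstoD) simp
  obtain L where L: "\<And>l. l \<ge> L \<Longrightarrow> l \<ge> lam0 + 1 \<and> U l < 1/4 \<and> Q l > 3/4 \<and> rh l \<le> Kr * e l powr n0"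
    using eventually_conj[OF eventually_ge_at_top[of "lam0+1"] eventually_conj[OF evU eventually_conj[OF evQ evrho]]]
    unfolding eventually_at_top_linorder by blast

  have LL: "l \<ge> lam0 \<and> 0 < U l \<and> U l < 1/4 \<and> 3/4 < Q l \<and> Q l < 1 \<and> 0 < Om l \<and> Om l < 1 \<and> rh l \<le> Kr * e l powr n0"
    if "l \<ge> L" for l
    using L[OF that] interior that by force
  define \<beta> where "\<beta> = (\<lambda>l. (2 * U l - 1) * (1 - Q l) + Q l * (1 - U l))"
  have beta: "Q l * \<beta> l \<ge> 15/64" if "l \<ge> L" for l
  proof -
    note X = LL[OF that]
    have 1: "(2 * U l - 1) * (1 - Q l) \<ge> -(1 - Q l)"
    proof -
      have "(2 * U l - 1) * (1 - Q l) + (1 - Q l) = 2 * U l * (1 - Q l)" by algebra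
      also have "\<dots> \<ge> 0" using X by simp
      finally show ?thesis by linarith
    qed
    have 2: "Q l * (1 - U l) \<ge> (3/4)*(3/4)" by (rule mult_mono) (use X in auto)
    have "\<beta> l \<ge> 5/16" unfolding \<beta>_def using 1 2 X by linarith
    then have "Q l * \<beta> l \<ge> (3/4) * (5/16)" by (intro mult_mono) (use X in auto)
    then show ?thesis by simp
  qed
  have dQ': "((\<lambda>l. 1 - Q l) has_real_derivative - (Q l * (1 - Q l) * \<beta> l)) (at l)" if "l \<ge> lam0" for l
    using DERIV_diff[OF DERIV_const odeQ[rule_format, OF that]] unfolding fQ_def \<beta>_def by simp
  have r_bdd: "r l \<le> exp (ln (r L) + 8 * (1 - Q L))" if "l \<ge> L" for l
  proof -
    have "ln (r l) + 8 * (1 - Q l) \<le> ln (r L) + 8 * (1 - Q L)"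
    proof (rule deriv_nonpos_imp_antimono[of L l _ "\<lambda>l. (1 - U l) * (1 - Q l) - 8 * (Q l * (1 - Q l) * \<beta> l)"])
      fix x assume x: "x \<in> {L..l}"
      then have x': "x \<ge> lam0" using LL[of x] by auto
      show "((\<lambda>l. ln (r l) + 8 * (1 - Q l)) has_real_derivative (1 - U x) * (1 - Q x) - 8 * (Q x * (1 - Q x) * \<beta> x)) (at x)"
        using DERIV_add[OF logder_ln[OF conjunct1[OF conjunct2[OF ders[OF x']]]] DERIV_cmult[OF dQ'[OF x'], of 8]]
          pos[OF x'] by simp
      have b: "Q x * \<beta> x \<ge> 15/64" using beta x by auto
      have "(1 - U x) * (1 - Q x) - 8 * (Q x * (1 - Q x) * \<beta> x) = (1 - Q x) * ((1 - U x) - 8 * (Q x * \<beta> x))"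
        by algebra
      also have "\<dots> \<le> 0" using b LL[of x] x by (intro mult_nonneg_nonpos) auto
      finally show "(1 - U x) * (1 - Q x) - 8 * (Q x * (1 - Q x) * \<beta> x) \<le> 0" .
    qed (use that in auto)
    moreover have "1 - Q l \<ge> 0" using LL[OF that] by auto
    ultimately have "ln (r l) \<le> ln (r L) + 8 * (1 - Q L)" by (smt (verit))
    then show ?thesis using pos[of l] LL[OF that] by (metis exp_le_cancel_iff exp_ln)
  qed
  have m_bdd: "m l \<le> exp (ln (m L) + 8 * (1 - Q L))" if "l \<ge> L" for l
  proof -
    have "ln (m l) + 8 * (1 - Q l) \<le> ln (m L) + 8 * (1 - Q L)"
    proof (rule deriv_nonpos_imp_antimono[of L l _ "\<lambda>l. U l * (1 - Q l) - 8 * (Q l * (1 - Q l) * \<beta> l)"])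
      fix x assume x: "x \<in> {L..l}"
      then have x': "x \<ge> lam0" using LL[of x] by auto
      show "((\<lambda>l. ln (m l) + 8 * (1 - Q l)) has_real_derivative U x * (1 - Q x) - 8 * (Q x * (1 - Q x) * \<beta> x)) (at x)"
        using DERIV_add[OF logder_ln[OF conjunct2[OF conjunct2[OF ders[OF x']]]] DERIV_cmult[OF dQ'[OF x'], of 8]]
          pos[OF x'] by simp
      have b: "Q x * \<beta> x \<ge> 15/64" using beta x by auto
      have "U x * (1 - Q x) - 8 * (Q x * (1 - Q x) * \<beta> x) = (1 - Q x) * (U x - 8 * (Q x * \<beta> x))"
        by algebra
      also have "\<dots> \<le> 0" using b LL[of x] x by (intro mult_nonneg_nonpos) auto
      finally show "U x * (1 - Q x) - 8 * (Q x * (1 - Q x) * \<beta> x) \<le> 0" .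
    qed (use that in auto)
    moreover have "1 - Q l \<ge> 0" using LL[OF that] by auto
    ultimately have "ln (m l) \<le> ln (m L) + 8 * (1 - Q L)" by (smt (verit))
    then show ?thesis using pos[of l] LL[OF that] by (metis exp_le_cancel_iff exp_ln)
  qed
  have r_inc: "r x < r y" if "L \<le> x" "x < y" for x y
  proof (rule DERIV_pos_imp_increasing[OF that(2)])
    fix t assume t: "x \<le> t" "t \<le> y"
    then have t': "t \<ge> lam0" "t \<ge> L" using LL[of t] that by auto
    show "\<exists>y. DERIV r t :> y \<and> 0 < y"
      using ders[OF t'(1)] pos[OF t'(1)] LL[OF t'(2)] by (intro exI[of _ "r t * ((1 - U t) * (1 - Q t))"]) auto
  qed
  have m_inc: "m x < m y" if "L \<le> x" "x < y" for x y
  proof (rule DERIV_pos_imp_increasing[OF that(2)])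
    fix t assume t: "x \<le> t" "t \<le> y"
    then have t': "t \<ge> lam0" "t \<ge> L" using LL[of t] that by auto
    show "\<exists>y. DERIV m t :> y \<and> 0 < y"
      using ders[OF t'(1)] pos[OF t'(1)] LL[OF t'(2)] by (intro exI[of _ "m t * (U t * (1 - Q t))"]) auto
  qed
  define R where "R = Sup (r ` {L..})"
  define M where "M = Sup (m ` {L..})"
  have r_lim: "(r \<longlongrightarrow> R) at_top" and r_le: "\<And>l. l \<ge> L \<Longrightarrow> r l \<le> R"
    using incr_bdd_lim[of L r, OF _ r_bdd] r_inc unfolding R_def by (force simp: le_less)+
  have m_lim: "(m \<longlongrightarrow> M) at_top" and m_le: "\<And>l. l \<ge> L \<Longrightarrow> m l \<le> M"
    using incr_bdd_lim[of L m, OF _ m_bdd] m_inc unfolding M_def by (force simp: le_less)+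
  have r_lt: "r l < R" if "l \<ge> L" for l
    using r_inc[OF that, of "l+1"] r_le[of "l+1"] that by simp
  have rL_pos: "r L > 0" and mL_pos: "m L > 0" using pos[of L] LL[of L] by auto
  have R_pos: "R > 0" and M_pos: "M > 0" using r_le[of L] m_le[of L] rL_pos mL_pos by auto

  have ids: "r l ^ 2 = S l \<and> u l * m l = 4 * pi * rh l * r l ^ 3 \<and> e l * Q l = m l * (1 - Q l) / r l"
    if l: "l \<ge> lam0" for l
  proof -
    note P = pos[OF l]
    have I: "U l \<in> {0<..<1}" "Q l \<in> {0<..<1}" "Om l \<in> {0<..<1}" using interior l by auto
    have 1: "r l ^ 2 = S l" unfolding r_eq using P by simp
    have "u l * m l = u l * q l * e l * r l" unfolding m_eq by simp
    also have "\<dots> = S l * (4 * pi * rh l) * r l" unfolding S_def using P by simp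
    also have "\<dots> = 4 * pi * rh l * r l ^ 3" using 1 by (simp add: power2_eq_square power3_eq_cube)
    finally have 2: "u l * m l = 4 * pi * rh l * r l ^ 3" .
    have 3: "e l * Q l = m l * (1 - Q l) / r l" unfolding m_eq q_def using P I by (simp add: field_simps)
    show ?thesis using 1 2 3 by blast
  qed
  define C where "C = M / R"
  define D where "D = M / (4 * pi * rho_minus * R ^ 3)"
  have C_lim: "((\<lambda>l. Om l powr (1 / a) / (1 - Q l)) \<longlongrightarrow> C) at_top"
  proof -
    have "((\<lambda>l. (e l + m l / r l) * (1 - Om l) powr (1/a)) \<longlongrightarrow> (0 + M / R) * (1 - 0) powr (1/a)) at_top"
      by (intro tendsto_intros e_lim m_lim r_lim toP2) (use R_pos in auto)
    then have "((\<lambda>l. (e l + m l / r l) * (1 - Om l) powr (1/a)) \<longlongrightarrow> C) at_top"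
      unfolding C_def by simp
    moreover have "eventually (\<lambda>l. (e l + m l / r l) * (1 - Om l) powr (1/a) = Om l powr (1 / a) / (1 - Q l)) at_top"
      using ev_lam
    proof eventually_elim
      case (elim l)
      note P = pos[OF elim]
      have I: "U l \<in> {0<..<1}" "Q l \<in> {0<..<1}" "Om l \<in> {0<..<1}" using interior elim by auto
      have "Om l powr (1/a) = ((Om l / (1 - Om l)) * (1 - Om l)) powr (1/a)" using I by simp
      also have "\<dots> = e l * (1 - Om l) powr (1/a)" unfolding e_eq by (rule powr_mult)
      finally have 1: "Om l powr (1/a) = e l * (1 - Om l) powr (1/a)" .
      have 2: "m l / r l = q l * e l" unfolding m_eq using P by simp
      show ?case unfolding 1 2 q_def using I by (simp add: field_simps)
    qed
    ultimately show ?thesis by (rule Lim_transform_eventually)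
  qed
  have D_lim: "((\<lambda>l. Om l powr (n0 / a) / U l) \<longlongrightarrow> D) at_top"
  proof -
    have rl: "((\<lambda>l. e l powr n0 / rh l) \<longlongrightarrow> 1 / rho_minus) at_top"
      using filterlim_compose[OF rho_lim e_right] unfolding rh_def .
    have ul: "(u \<longlongrightarrow> 0 / (1 - 0)) at_top" unfolding u_def by (intro tendsto_intros toP2) simp
    have "((\<lambda>l. (e l powr n0 / rh l) * (1 - Om l) powr (n0/a) * (1 + u l) * m l / (4 * pi * r l ^ 3))
       \<longlongrightarrow> (1 / rho_minus) * (1 - 0) powr (n0/a) * (1 + 0 / (1 - 0)) * M / (4 * pi * R ^ 3)) at_top"
      by (intro tendsto_intros rl ul m_lim r_lim toP2) (use R_pos in auto)
    then have "((\<lambda>l. (e l powr n0 / rh l) * (1 - Om l) powr (n0/a) * (1 + u l) * m l / (4 * pi * r l ^ 3)) \<longlongrightarrow> D) at_top"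
      unfolding D_def using rho_minus_pos by (simp add: field_simps)
    moreover have "eventually (\<lambda>l. (e l powr n0 / rh l) * (1 - Om l) powr (n0/a) * (1 + u l) * m l / (4 * pi * r l ^ 3) = Om l powr (n0 / a) / U l) at_top"
      using ev_lam
    proof eventually_elim
      case (elim l)
      note P = pos[OF elim]
      have I: "U l \<in> {0<..<1}" "Q l \<in> {0<..<1}" "Om l \<in> {0<..<1}" using interior elim by auto
      have "Om l powr (n0/a) = ((Om l / (1 - Om l)) * (1 - Om l)) powr (n0/a)" using I by simp
      also have "\<dots> = (Om l / (1 - Om l)) powr (1/a * n0) * (1 - Om l) powr (n0/a)" by (subst powr_mult) simp
      also have "\<dots> = e l powr n0 * (1 - Om l) powr (n0/a)" unfolding e_eq by (simp add: powr_powr)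
      finally have 1: "Om l powr (n0/a) = e l powr n0 * (1 - Om l) powr (n0/a)" .
      have um: "u l * m l = 4 * pi * rh l * r l ^ 3" using ids[OF elim] by blast
      have 2: "1 / U l = (1 + u l) * m l / (4 * pi * rh l * r l ^ 3)"
        unfolding um[symmetric] using I P unfolding u_def by (simp add: field_simps)
      have "Om l powr (n0 / a) / U l = Om l powr (n0 / a) * (1 / U l)" by simp
      also have "\<dots> = (e l powr n0 / rh l) * (1 - Om l) powr (n0/a) * (1 + u l) * m l / (4 * pi * r l ^ 3)"
        unfolding 1 2 using P by (simp add: field_simps)
      finally show ?case by simp
    qed
    ultimately show ?thesis by (rule Lim_transform_eventually)
  qed
  have C_pos: "C > 0" and D_pos: "D > 0" unfolding C_def D_def using M_pos R_pos rho_minus_pos by auto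
  have R2: "R\<^sup>2 = 1 / (4 * pi * rho_minus) * (C / D)" unfolding C_def D_def using M_pos R_pos rho_minus_pos
    by (simp add: field_simps power2_eq_square power3_eq_cube)
  have M2: "M\<^sup>2 = 1 / (4 * pi * rho_minus) * (C ^ 3 / D)" unfolding C_def D_def using M_pos R_pos rho_minus_pos
    by (simp add: field_simps power2_eq_square power3_eq_cube)

  define d where "d = (\<lambda>l. R - r l)"
  have d_pos: "d l > 0" if "l \<ge> L" for l unfolding d_def using r_lt[OF that] by simp
  have d_lim: "(d \<longlongrightarrow> 0) at_top" unfolding d_def using tendsto_diff[OF tendsto_const r_lim, of R] by simp
  have evL: "eventually (\<lambda>l. l \<ge> L) at_top" by (rule eventually_ge_at_top)
  have dpow_lim: "((\<lambda>l. d l powr p) \<longlongrightarrow> 0) at_top" if "p > 0" for p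
    by (rule tendsto_zero_powrI[OF d_lim tendsto_const _ that]) (use evL in eventually_elim, use d_pos in force)
  have XL: "x \<ge> lam0" "0 < U x" "U x < 1" "0 < Q x" "Q x < 1" "r L \<le> r x" "r x < R" "m x \<le> M"
    "0 < r x" "0 < m x" "0 < e x" "0 < rh x" if "x \<ge> L" for x
    using LL[OF that] r_inc[of L x] r_lt[OF that] m_le[OF that] pos[of x] that by (auto simp: le_less)
  define c1 where "c1 = M / r L ^ 2"
  have c1_pos: "c1 > 0" unfolding c1_def using M_pos rL_pos by simp
  have mc1: "m x \<le> c1 * r x ^ 2" if "x \<ge> L" for x
  proof -
    have "r L ^ 2 \<le> r x ^ 2" using XL[OF that] rL_pos by (intro power_mono) auto
    then have "M \<le> c1 * r x ^ 2" unfolding c1_def using rL_pos M_pos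
      by (simp add: field_simps)
    then show ?thesis using XL[OF that] by linarith
  qed
  have e_bd: "e l \<le> c1 * d l" if "l \<ge> L" for l
  proof -
    have "0 \<le> c1 * d l - e l"
    proof (rule nonneg_if_deriv_nonpos[of L "\<lambda>l. c1 * d l - e l"
          "\<lambda>l. - (c1 * (r l * ((1 - U l) * (1 - Q l)))) - e l * (- Q l * (1 - U l))"])
      fix x assume x: "x \<ge> L"
      note X = XL[OF x]
      show "((\<lambda>l. c1 * d l - e l) has_real_derivative
          - (c1 * (r x * ((1 - U x) * (1 - Q x)))) - e x * (- Q x * (1 - U x))) (at x)"
        unfolding d_def using DERIV_diff[OF DERIV_cmult[OF DERIV_diff[OF DERIV_const conjunct1[OF conjunct2[OF ders[OF X(1)]]]]] conjunct1[OF ders[OF X(1)]], of c1 R]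
        by simp
      have eQ: "e x * Q x = m x * (1 - Q x) / r x" using ids[OF X(1)] by blast
      have "- (c1 * (r x * ((1 - U x) * (1 - Q x)))) - e x * (- Q x * (1 - U x))
          = - (c1 * (r x * ((1 - U x) * (1 - Q x)))) + (e x * Q x) * (1 - U x)" by algebra
      also have "\<dots> = ((1 - U x) * (1 - Q x)) * (m x / r x - c1 * r x)"
        unfolding eQ using X by (simp add: field_simps)
      finally have "- (c1 * (r x * ((1 - U x) * (1 - Q x)))) - e x * (- Q x * (1 - U x))
          = ((1 - U x) * (1 - Q x)) * (m x / r x - c1 * r x)" .
      also have "\<dots> \<le> 0"
      proof (rule mult_nonneg_nonpos)
        show "0 \<le> (1 - U x) * (1 - Q x)" using X by simp
        have "m x / r x \<le> c1 * r x ^ 2 / r x" using mc1[OF x] X by (simp add: divide_right_mono)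
        then show "m x / r x - c1 * r x \<le> 0" using X by (simp add: power2_eq_square)
      qed
      finally show "- (c1 * (r x * ((1 - U x) * (1 - Q x)))) - e x * (- Q x * (1 - U x)) \<le> 0" .
    next
      show "((\<lambda>l. c1 * d l - e l) \<longlongrightarrow> 0) at_top"
        using tendsto_diff[OF tendsto_mult[OF tendsto_const d_lim] e_lim, of c1] by simp
    qed (rule that)
    then show ?thesis by simp
  qed
  have rh_bd: "rh l \<le> Kr * c1 powr n0 * d l powr n0" if "l \<ge> L" for l
  proof -
    have "e l powr n0 \<le> (c1 * d l) powr n0"
      using e_bd[OF that] XL[OF that] n0_pos by (intro powr_mono2) auto
    also have "\<dots> = c1 powr n0 * d l powr n0" using c1_pos d_pos[OF that] by (simp add: powr_mult)
    finally show ?thesis using LL[OF that] Kr_pos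
      by (smt (verit) mult_left_mono mult.assoc)
  qed

  define B where "B = Kr * c1 powr n0"
  have B_pos: "B > 0" unfolding B_def using Kr_pos c1_pos by simp
  define K1 where "K1 = 4 * pi * R ^ 2 * B / (n0 + 1)"
  have K1_pos: "K1 > 0" unfolding K1_def using B_pos R_pos n0_pos by simp
  have mU: "m x * U x = 4 * pi * rh x * r x ^ 3 * (1 - U x)" if "x \<ge> L" for x
  proof -
    note X = XL[OF that]
    have "u x * m x = 4 * pi * rh x * r x ^ 3" using ids[OF X(1)] by blast
    then have "U x * m x = 4 * pi * rh x * r x ^ 3 * (1 - U x)" unfolding u_def using X
      by (simp add: field_simps)
    then show ?thesis by (simp add: mult.commute)
  qed
  have Mm_bd: "M - m l \<le> K1 * d l powr (n0 + 1)" if "l \<ge> L" for l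
  proof -
    have "0 \<le> K1 * d l powr (n0 + 1) - (M - m l)"
    proof (rule nonneg_if_deriv_nonpos[of L "\<lambda>l. K1 * d l powr (n0 + 1) - (M - m l)"
          "\<lambda>l. K1 * (- ((n0 + 1) * d l powr (n0 + 1 - 1) * (r l * ((1 - U l) * (1 - Q l))))) - (- (m l * (U l * (1 - Q l))))"])
      fix x assume x: "x \<ge> L"
      note X = XL[OF x]
      have dd: "((\<lambda>l. d l powr (n0 + 1)) has_real_derivative - ((n0 + 1) * d x powr (n0 + 1 - 1) * (r x * ((1 - U x) * (1 - Q x))))) (at x)"
        unfolding d_def by (rule deriv_dpow) (use d_pos[OF x] ders[OF X(1)] in \<open>auto simp: d_def\<close>)
      show "((\<lambda>l. K1 * d l powr (n0 + 1) - (M - m l)) has_real_derivative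
          K1 * (- ((n0 + 1) * d x powr (n0 + 1 - 1) * (r x * ((1 - U x) * (1 - Q x))))) - (- (m x * (U x * (1 - Q x))))) (at x)"
        using DERIV_diff[OF DERIV_cmult[OF dd, of K1] DERIV_diff[OF DERIV_const conjunct2[OF conjunct2[OF ders[OF X(1)]]], of M]]
        by simp
      have "K1 * (- ((n0 + 1) * d x powr (n0 + 1 - 1) * (r x * ((1 - U x) * (1 - Q x))))) - (- (m x * (U x * (1 - Q x))))
          = - (K1 * (n0 + 1) * d x powr n0 * (r x * ((1 - U x) * (1 - Q x)))) + (m x * U x) * (1 - Q x)"
        by simp
      also have "\<dots> = (4 * pi * (r x * ((1 - U x) * (1 - Q x)))) * (rh x * r x ^ 2 - (B * d x powr n0) * R ^ 2)"
        unfolding mU[OF x] K1_def using n0_pos by (simp add: field_simps power2_eq_square power3_eq_cube)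
      also have "\<dots> \<le> 0"
      proof (rule mult_nonneg_nonpos)
        show "0 \<le> 4 * pi * (r x * ((1 - U x) * (1 - Q x)))" using X by simp
        have "rh x * r x ^ 2 \<le> (B * d x powr n0) * R ^ 2"
          by (rule mult_mono) (use rh_bd[OF x] X B_pos in \<open>auto simp: B_def intro: power_mono\<close>)
        then show "rh x * r x ^ 2 - (B * d x powr n0) * R ^ 2 \<le> 0" by simp
      qed
      finally show "K1 * (- ((n0 + 1) * d x powr (n0 + 1 - 1) * (r x * ((1 - U x) * (1 - Q x))))) - (- (m x * (U x * (1 - Q x)))) \<le> 0" .
    next
      show "((\<lambda>l. K1 * d l powr (n0 + 1) - (M - m l)) \<longlongrightarrow> 0) at_top"
        using tendsto_diff[OF tendsto_mult[OF tendsto_const dpow_lim[of "n0+1"]] tendsto_diff[OF tendsto_const m_lim], of K1 M] n0_pos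
        by simp
    qed (rule that)
    then show ?thesis by simp
  qed
  define E where "E = (\<lambda>l. e l - M * (1 / r l - 1 / R))"
  have E_lim: "(E \<longlongrightarrow> 0) at_top"
    unfolding E_def using tendsto_diff[OF e_lim tendsto_mult[OF tendsto_const tendsto_diff[OF tendsto_divide[OF tendsto_const r_lim] tendsto_const]], of M 1 "1/R"] R_pos
    by simp
  have dE: "(E has_real_derivative (M - m x) * ((1 - U x) * (1 - Q x)) / r x) (at x)" if x: "x \<ge> L" for x
  proof -
    note X = XL[OF x]
    have "(E has_real_derivative e x * (- Q x * (1 - U x)) - M * ((0 * r x - 1 * (r x * ((1 - U x) * (1 - Q x)))) / (r x * r x) - 0)) (at x)"
      unfolding E_def
      by (intro DERIV_diff DERIV_cmult DERIV_divide DERIV_const) (use ders[OF X(1)] X in auto)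
    moreover have "e x * (- Q x * (1 - U x)) - M * ((0 * r x - 1 * (r x * ((1 - U x) * (1 - Q x)))) / (r x * r x) - 0)
        = (M - m x) * ((1 - U x) * (1 - Q x)) / r x"
    proof -
      have eQ: "e x * Q x = m x * (1 - Q x) / r x" using ids[OF X(1)] by blast
      have e': "e x = m x * (1 - Q x) / (r x * Q x)" using eQ X by (simp add: field_simps)
      show ?thesis unfolding e' using X by (simp add: field_simps)
    qed
    ultimately show ?thesis by (rule DERIV_cong)
  qed
  have E_neg: "E l \<le> 0" if "l \<ge> L" for l
  proof -
    have "0 \<le> - E l"
    proof (rule nonneg_if_deriv_nonpos[of L "\<lambda>l. - E l" "\<lambda>x. - ((M - m x) * ((1 - U x) * (1 - Q x)) / r x)"])
      fix x assume x: "x \<ge> L"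
      show "((\<lambda>l. - E l) has_real_derivative - ((M - m x) * ((1 - U x) * (1 - Q x)) / r x)) (at x)"
        using DERIV_minus[OF dE[OF x]] .
      show "- ((M - m x) * ((1 - U x) * (1 - Q x)) / r x) \<le> 0" using XL[OF x] by simp
    qed (use E_lim tendsto_minus[OF E_lim] that in auto)
    then show ?thesis by simp
  qed
  define K3 where "K3 = K1 / ((n0 + 2) * r L ^ 2)"
  have K3_pos: "K3 > 0" unfolding K3_def using K1_pos n0_pos rL_pos by simp
  have E_bd: "- E l \<le> K3 * d l powr (n0 + 2)" if "l \<ge> L" for l
  proof -
    have "0 \<le> K3 * d l powr (n0 + 2) + E l"
    proof (rule nonneg_if_deriv_nonpos[of L "\<lambda>l. K3 * d l powr (n0 + 2) + E l"
          "\<lambda>x. K3 * (- ((n0 + 2) * d x powr (n0 + 2 - 1) * (r x * ((1 - U x) * (1 - Q x))))) + (M - m x) * ((1 - U x) * (1 - Q x)) / r x"])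
      fix x assume x: "x \<ge> L"
      note X = XL[OF x]
      have dd: "((\<lambda>l. d l powr (n0 + 2)) has_real_derivative - ((n0 + 2) * d x powr (n0 + 2 - 1) * (r x * ((1 - U x) * (1 - Q x))))) (at x)"
        unfolding d_def by (rule deriv_dpow) (use d_pos[OF x] ders[OF X(1)] in \<open>auto simp: d_def\<close>)
      show "((\<lambda>l. K3 * d l powr (n0 + 2) + E l) has_real_derivative
          K3 * (- ((n0 + 2) * d x powr (n0 + 2 - 1) * (r x * ((1 - U x) * (1 - Q x))))) + (M - m x) * ((1 - U x) * (1 - Q x)) / r x) (at x)"
        by (intro DERIV_add DERIV_cmult dd dE x)
      have "K3 * (- ((n0 + 2) * d x powr (n0 + 2 - 1) * (r x * ((1 - U x) * (1 - Q x))))) + (M - m x) * ((1 - U x) * (1 - Q x)) / r x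
          = (r x * ((1 - U x) * (1 - Q x))) * ((M - m x) / r x ^ 2 - K1 * d x powr (n0 + 1) / r L ^ 2)"
      proof -
        have nz: "(n0 + 2) \<noteq> 0" "r L ^ 2 \<noteq> 0" using n0_pos rL_pos by auto
        have k: "K3 * (n0 + 2) = K1 / r L ^ 2" unfolding K3_def using nz by (simp add: divide_simps)
        have p: "n0 + 2 - 1 = n0 + 1" by simp
        have "K3 * (- ((n0 + 2) * d x powr (n0 + 2 - 1) * (r x * ((1 - U x) * (1 - Q x)))))
            = - ((K3 * (n0 + 2)) * d x powr (n0 + 1) * (r x * ((1 - U x) * (1 - Q x))))"
          unfolding p by (simp add: algebra_simps)
        also have "\<dots> = - (K1 / r L ^ 2 * d x powr (n0 + 1) * (r x * ((1 - U x) * (1 - Q x))))" unfolding k ..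
        finally have eqA: "K3 * (- ((n0 + 2) * d x powr (n0 + 2 - 1) * (r x * ((1 - U x) * (1 - Q x)))))
            = - (K1 / r L ^ 2 * d x powr (n0 + 1) * (r x * ((1 - U x) * (1 - Q x))))" .
        show ?thesis unfolding eqA using X by (simp add: field_simps power2_eq_square)
      qed
      also have "\<dots> \<le> 0"
      proof (rule mult_nonneg_nonpos)
        show "0 \<le> r x * ((1 - U x) * (1 - Q x))" using X by simp
        have "(M - m x) / r x ^ 2 \<le> (M - m x) / r L ^ 2"
          using X rL_pos by (intro divide_left_mono power_mono) auto
        also have "\<dots> \<le> K1 * d x powr (n0 + 1) / r L ^ 2"
          using Mm_bd[OF x] rL_pos by (simp add: divide_right_mono)
        finally show "(M - m x) / r x ^ 2 - K1 * d x powr (n0 + 1) / r L ^ 2 \<le> 0" by simp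
      qed
      finally show "K3 * (- ((n0 + 2) * d x powr (n0 + 2 - 1) * (r x * ((1 - U x) * (1 - Q x))))) + (M - m x) * ((1 - U x) * (1 - Q x)) / r x \<le> 0" .
    next
      show "((\<lambda>l. K3 * d l powr (n0 + 2) + E l) \<longlongrightarrow> 0) at_top"
        using tendsto_add[OF tendsto_mult[OF tendsto_const dpow_lim[of "n0+2"]] E_lim, of K3] n0_pos
        by simp
    qed (rule that)
    then show ?thesis by simp
  qed

  define p where "p = 2 + min 1 n0"
  have p_bds: "0 < p" "p \<le> 3" "p \<le> n0 + 2" using n0_pos unfolding p_def by auto
  define Kf where "Kf = K3 * R powr (n0 + 2) + M / r L"
  have Kf_pos: "Kf > 0" using K3_pos R_pos M_pos rL_pos by (simp add: Kf_def add_pos_pos)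
  have BO: "(\<lambda>l. (- M / R - e l) - (- C * ((R - r l) / R) - C * ((R - r l) / R)\<^sup>2 + - M / R))
      \<in> O[at_top](\<lambda>l. ((R - r l) / R) powr (2 + min 1 n0))"
    unfolding bigo_def
  proof (intro CollectI exI conjI)
    show "Kf > 0" by (rule Kf_pos)
    show "eventually (\<lambda>l. norm ((- M / R - e l) - (- C * ((R - r l) / R) - C * ((R - r l) / R)\<^sup>2 + - M / R))
        \<le> Kf * norm (((R - r l) / R) powr (2 + min 1 n0))) at_top"
      using evL
    proof eventually_elim
      case (elim l)
      note X = XL[OF elim]
      define \<delta> where "\<delta> = (R - r l) / R"
      have \<delta>: "0 < \<delta>" "\<delta> < 1" using X R_pos unfolding \<delta>_def by (auto simp: field_simps)
      have dl: "d l = R * \<delta>" unfolding d_def \<delta>_def using R_pos by simp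
      have eqX: "(- M / R - e l) - (- C * \<delta> - C * \<delta>\<^sup>2 + - M / R) = - E l - M * \<delta> ^ 3 / r l"
        unfolding E_def C_def \<delta>_def using X R_pos by (simp add: field_simps power2_eq_square power3_eq_cube)
      have En: "0 \<le> - E l" using E_neg[OF elim] by simp
      have y0: "0 \<le> M * \<delta> ^ 3 / r l" using M_pos \<delta> X by simp
      have "norm ((- M / R - e l) - (- C * \<delta> - C * \<delta>\<^sup>2 + - M / R)) \<le> - E l + M * \<delta> ^ 3 / r l"
        unfolding eqX using En y0 by simp
      also have "\<dots> \<le> K3 * R powr (n0 + 2) * \<delta> powr p + M / r L * \<delta> powr p"
      proof (rule add_mono)
        have "- E l \<le> K3 * d l powr (n0 + 2)" by (rule E_bd[OF elim])
        also have "\<dots> = K3 * R powr (n0 + 2) * \<delta> powr (n0 + 2)" unfolding dl using R_pos \<delta>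
          by (simp add: powr_mult)
        also have "\<dots> \<le> K3 * R powr (n0 + 2) * \<delta> powr p"
          using p_bds \<delta> K3_pos R_pos by (intro mult_left_mono powr_mono') auto
        finally show "- E l \<le> K3 * R powr (n0 + 2) * \<delta> powr p" .
        have "\<delta> ^ 3 = \<delta> powr 3" using powr_realpow[of \<delta> 3] \<delta> by simp
        also have "\<dots> \<le> \<delta> powr p" using p_bds \<delta> by (intro powr_mono') auto
        finally have d3: "\<delta> ^ 3 \<le> \<delta> powr p" .
        have "M * \<delta> ^ 3 / r l \<le> M * \<delta> ^ 3 / r L"
          using X rL_pos M_pos \<delta> by (intro divide_left_mono) auto
        also have "\<dots> \<le> M * \<delta> powr p / r L"
          using d3 M_pos rL_pos by (intro divide_right_mono mult_left_mono) auto
        finally show "M * \<delta> ^ 3 / r l \<le> M / r L * \<delta> powr p" by simp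
      qed
      also have "\<dots> = Kf * norm (\<delta> powr p)" unfolding Kf_def by (simp add: algebra_simps)
      finally show ?case unfolding \<delta>_def p_def .
    qed
  qed
  show ?thesis
    unfolding Let_def
  proof (rule exI[of _ C], rule exI[of _ D], rule exI[of _ R], rule exI[of _ M], intro conjI)
    show "((\<lambda>l. fluid_r rhoE a (U l) (Q l) (Om l)) \<longlongrightarrow> R) at_top" using r_lim unfolding r_def .
    show "((\<lambda>l. fluid_m rhoE a (U l) (Q l) (Om l)) \<longlongrightarrow> M) at_top" using m_lim unfolding m_def .
    show "(\<lambda>l. - M / R - eta_of a (Om l) - (- C * ((R - fluid_r rhoE a (U l) (Q l) (Om l)) / R) -
             C * ((R - fluid_r rhoE a (U l) (Q l) (Om l)) / R)\<^sup>2 + - M / R))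
      \<in> O[at_top](\<lambda>l. ((R - fluid_r rhoE a (U l) (Q l) (Om l)) / R) powr (2 + min 1 n0))"
      using BO unfolding r_def e_def .
  qed (fact C_pos D_pos C_lim D_lim R_pos M_pos R2 M2)+
qed

end
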